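(* Let $F\colon\Omega\to\Omega$ be a piecewise translation in $\mathbb{R}^d$ with any number $m$ of branches, and let $\mathcal{F}\colon\Omega\to\Sigma$ be its fate map. If $\omega\in\Sigma$ is not eventually periodic (i.e. there are no $n\ge0$, $p\ge1$ with $\sigma^{n+p}\omega=\sigma^n\omega$), then $\mathrm{Leb}(\mathcal{F}^{-1}(\omega))=0$.
   Context: A region is a compact subset of $\mathbb{R}^d$ which equals the closure of its interior. A piecewise translation with $m$ branches: $\Omega\subset\mathbb{R}^d$ is a region, $\Omega=P_0\cup\dots\cup P_{m-1}$ with each $P_i$ a region, distinct $P_i$ intersecting only in boundaries, $\mathrm{Leb}(\partial P_i)=0$; vectors $v_i$ satisfy $x+v_i\in\Omega$ for $x\in P_i$; $i(x)$ is an index with $x\in P_{i(x)}$ (boundary ambiguity resolved by a fixed measurable rule), and $F(x)=x+v_{i(x)}$. $\Sigma=\{0,\dots,m-1\}^{\mathbb{N}_0}$ with left shift $\sigma$. The fate map is $\mathcal{F}(x)=(i(x),i(F(x)),i(F^2(x)),\dots)$; it satisfies $\mathcal{F}\circ F=\sigma\circ\mathcal{F}$. *)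

theory Defs
  imports "HOL-Analysis.Analysis"
begin

definition region :: "'a::euclidean_space set \<Rightarrow> bool" where
  "region S \<longleftrightarrow> compact S \<and> closure (interior S) = S"

definition piecewise_translation ::
  "'a::euclidean_space set \<Rightarrow> nat \<Rightarrow> (nat \<Rightarrow> 'a set) \<Rightarrow> (nat \<Rightarrow> 'a) \<Rightarrow> ('a \<Rightarrow> nat) \<Rightarrow> bool" where
  "piecewise_translation \<Omega> m P v idx \<longleftrightarrow>
     region \<Omega> \<and>
     \<Omega> = (\<Union>i<m. P i) \<and>
     (\<forall>i<m. region (P i)) \<and>
     (\<forall>i<m. \<forall>j<m. i \<noteq> j \<longrightarrow> P i \<inter> P j \<subseteq> frontier (P i) \<inter> frontier (P j)) \<and>
     (\<forall>i<m. frontier (P i) \<in> null_sets lebesgue) \<and>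
     (\<forall>i<m. \<forall>x\<in>P i. x + v i \<in> \<Omega>) \<and>
     (\<forall>x\<in>\<Omega>. idx x < m \<and> x \<in> P (idx x)) \<and>
     idx \<in> measurable (lebesgue_on \<Omega>) (count_space UNIV)"

definition pt_map :: "(nat \<Rightarrow> 'a::euclidean_space) \<Rightarrow> ('a \<Rightarrow> nat) \<Rightarrow> 'a \<Rightarrow> 'a" where
  "pt_map v idx x = x + v (idx x)"

definition fate :: "(nat \<Rightarrow> 'a::euclidean_space) \<Rightarrow> ('a \<Rightarrow> nat) \<Rightarrow> 'a \<Rightarrow> nat \<Rightarrow> nat" where
  "fate v idx x n = idx ((pt_map v idx ^^ n) x)"

definition eventually_periodic :: "(nat \<Rightarrow> 'b) \<Rightarrow> bool" where
  "eventually_periodic w \<longleftrightarrow> (\<exists>n p. p \<ge> 1 \<and> (\<lambda>k. w (k + (n + p))) = (\<lambda>k. w (k + n)))"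

end

theory Submission
  imports Defs
begin

lemma funpow_pt_map:
  assumes "\<forall>n. idx (x + s n) = w n" "\<forall>n. s (Suc n) = s n + v (w n)" "s 0 = 0"
  shows "(pt_map v idx ^^ n) x = x + s n"
  using assms by (induction n) (auto simp: pt_map_def algebra_simps)

lemma funpow_pt_map2:
  assumes "\<forall>n. idx ((pt_map v idx ^^ n) x) = w n" "\<forall>n. s (Suc n) = s n + v (w n)" "s 0 = 0"
  shows "(pt_map v idx ^^ n) x = x + s n"
proof (induction n)
  case (Suc n)
  have "(pt_map v idx ^^ Suc n) x = (pt_map v idx ^^ n) x + v (idx ((pt_map v idx ^^ n) x))"
    by (simp add: pt_map_def)
  also have "\<dots> = x + s n + v (w n)" by (metis Suc.IH assms(1))
  finally show ?case using assms(2) by (simp add: algebra_simps)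
qed (use assms in simp)

lemma fate_shift: "fate v idx ((pt_map v idx ^^ n) x) j = fate v idx x (j + n)"
  by (simp add: fate_def funpow_add)

theorem lemma2p7:
  fixes \<Omega> :: "'a::euclidean_space set" and m :: nat and P :: "nat \<Rightarrow> 'a set"
    and v :: "nat \<Rightarrow> 'a" and idx :: "'a \<Rightarrow> nat" and \<omega> :: "nat \<Rightarrow> nat"
  assumes "piecewise_translation \<Omega> m P v idx"
    and "\<forall>n. \<omega> n < m"
    and "\<not> eventually_periodic \<omega>"
  shows "{x \<in> \<Omega>. fate v idx x = \<omega>} \<in> null_sets lebesgue"
proof -
  let ?F = "pt_map v idx"
  define A where "A = {x \<in> \<Omega>. fate v idx x = \<omega>}"
  define s where "s n = (\<Sum>j<n. v (\<omega> j))" for n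
  have s0: "s 0 = 0" and sS: "\<forall>n. s (Suc n) = s n + v (\<omega> n)" by (auto simp: s_def)
  have PT: "region \<Omega>" "\<Omega> = (\<Union>i<m. P i)" "\<forall>i<m. \<forall>x\<in>P i. x + v i \<in> \<Omega>"
     "\<forall>x\<in>\<Omega>. idx x < m \<and> x \<in> P (idx x)" "idx \<in> measurable (lebesgue_on \<Omega>) (count_space UNIV)"
    using assms(1) unfolding piecewise_translation_def by auto
  have cO: "compact \<Omega>" using PT(1) by (simp add: region_def)
  have Olm: "\<Omega> \<in> lmeasurable" using cO by (rule lmeasurable_compact)
  have Osets: "\<Omega> \<in> sets lebesgue" using Olm by (simp add: fmeasurable_def)
  have Fin: "?F x \<in> \<Omega>" if "x \<in> \<Omega>" for x
    using PT(3,4) that by (auto simp: pt_map_def)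
  have Fnin: "(?F ^^ n) x \<in> \<Omega>" if "x \<in> \<Omega>" for x n
    using that by (induction n) (auto intro: Fin)
  define B where "B k = {y \<in> \<Omega>. idx y = k}" for k
  have Bsets: "B k \<in> sets lebesgue" for k
  proof -
    have "idx -` {k} \<inter> space (lebesgue_on \<Omega>) \<in> sets (lebesgue_on \<Omega>)"
      using PT(5) by (rule measurable_sets) simp
    moreover have "idx -` {k} \<inter> space (lebesgue_on \<Omega>) = B k"
      by (auto simp: B_def)
    ultimately show ?thesis using Osets by (simp add: sets_restrict_space_iff)
  qed
  have Aeq: "A = (\<Inter>n. (\<lambda>y. - s n + y) ` B (\<omega> n))"
  proof (intro equalityI subsetI)
    fix x assume x: "x \<in> A"
    hence xO: "x \<in> \<Omega>" and fx: "fate v idx x = \<omega>" by (auto simp: A_def)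
    have "\<forall>n. idx ((?F ^^ n) x) = \<omega> n" using fx by (auto simp: fate_def fun_eq_iff)
    hence Fn: "(?F ^^ n) x = x + s n" for n using funpow_pt_map2[of idx v x \<omega> s, OF _ sS s0] by blast
    show "x \<in> (\<Inter>n. (\<lambda>y. - s n + y) ` B (\<omega> n))"
    proof
      fix n
      have "x + s n \<in> B (\<omega> n)"
      proof -
        have "idx ((?F ^^ n) x) = \<omega> n" using fx by (simp add: fate_def fun_eq_iff)
        then show ?thesis using Fnin[OF xO, of n] Fn[of n] by (simp add: B_def)
      qed
      then show "x \<in> (\<lambda>y. - s n + y) ` B (\<omega> n)"
        by (rule rev_image_eqI) simp
    qed
  next
    fix x assume "x \<in> (\<Inter>n. (\<lambda>y. - s n + y) ` B (\<omega> n))"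
    hence h: "x + s n \<in> B (\<omega> n)" for n
    proof -
      assume "x \<in> (\<Inter>n. (\<lambda>y. - s n + y) ` B (\<omega> n))"
      then obtain y where "y \<in> B (\<omega> n)" "x = - s n + y" by blast
      then show ?thesis by simp
    qed
    hence "\<forall>n. idx (x + s n) = \<omega> n" by (auto simp: B_def)
    hence Fn: "(?F ^^ n) x = x + s n" for n using funpow_pt_map[of idx x s \<omega> v, OF _ sS s0] by blast
    have "x \<in> \<Omega>" using h[of 0] s0 by (auto simp: B_def)
    moreover have "fate v idx x = \<omega>"
      using h by (auto simp: fate_def fun_eq_iff Fn B_def)
    ultimately show "x \<in> A" by (simp add: A_def)
  qed
  have Asets: "A \<in> sets lebesgue"
  proof -
    have "(\<lambda>y. - s n + y) ` B (\<omega> n) \<in> sets lebesgue" for n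
      by (rule lebesgue_sets_translation[OF Bsets])
    then show ?thesis unfolding Aeq by (intro sets.countable_INT') auto
  qed
  have AO: "A \<subseteq> \<Omega>" by (auto simp: A_def)
  have Alm: "A \<in> lmeasurable" using fmeasurableI2[OF Olm AO Asets] .
  define T where "T n = (\<lambda>y. s n + y) ` A" for n
  have Tlm: "T n \<in> lmeasurable" for n unfolding T_def by (rule measurable_translation[OF Alm])
  have Tm: "measure lebesgue (T n) = measure lebesgue A" for n
    unfolding T_def by (rule measure_translation)
  have TO: "T n \<subseteq> \<Omega>" for n
  proof
    fix y assume "y \<in> T n"
    then obtain x where x: "x \<in> A" "y = s n + x" by (auto simp: T_def)
    hence "\<forall>n. idx ((?F ^^ n) x) = \<omega> n" by (auto simp: A_def fate_def fun_eq_iff)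
    hence "(?F ^^ n) x = x + s n" using funpow_pt_map2[of idx v x \<omega> s, OF _ sS s0] by blast
    with Fnin[of x n] x show "y \<in> \<Omega>" by (auto simp: A_def add.commute)
  qed
  have Tfate: "fate v idx y j = \<omega> (j + n)" if yT: "y \<in> T n" for y j n
  proof -
    obtain x where x: "x \<in> A" "y = s n + x" using yT unfolding T_def by blast
    hence "\<forall>n. idx ((?F ^^ n) x) = \<omega> n" by (auto simp: A_def fate_def fun_eq_iff)
    hence "(?F ^^ n) x = x + s n" using funpow_pt_map2[of idx v x \<omega> s, OF _ sS s0] by blast
    hence "y = (?F ^^ n) x" using x by (simp add: add.commute)
    then show ?thesis using fate_shift[of v idx n x j] x(1) by (simp add: A_def)
  qed
  have disj: "disjoint_family T"
  unfolding disjoint_family_on_def proof (intro ballI impI)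
    fix n k :: nat assume "n \<noteq> k"
    show "T n \<inter> T k = {}"
    proof (rule ccontr)
      assume "T n \<inter> T k \<noteq> {}"
      then obtain y where y: "y \<in> T n" "y \<in> T k" by auto
      have eq: "\<omega> (j + n) = \<omega> (j + k)" for j using Tfate[OF y(1)] Tfate[OF y(2)] by metis
      show False
      proof (cases "n < k")
        case True
        have "(\<lambda>j. \<omega> (j + (n + (k - n)))) = (\<lambda>j. \<omega> (j + n))" using eq True by auto
        hence "eventually_periodic \<omega>" unfolding eventually_periodic_def
          using True by (intro exI[of _ n] exI[of _ "k - n"]) auto
        with assms(3) show False by simp
      next
        case False
        with \<open>n \<noteq> k\<close> have "k < n" by simp
        have "(\<lambda>j. \<omega> (j + (k + (n - k)))) = (\<lambda>j. \<omega> (j + k))" using eq \<open>k < n\<close> by auto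
        hence "eventually_periodic \<omega>" unfolding eventually_periodic_def
          using \<open>k < n\<close> by (intro exI[of _ k] exI[of _ "n - k"]) auto
        with assms(3) show False by simp
      qed
    qed
  qed
  have bound: "real N * measure lebesgue A \<le> measure lebesgue \<Omega>" for N
  proof -
    have "measure lebesgue (\<Union>i\<in>{..<N}. T i) = (\<Sum>i\<in>{..<N}. measure lebesgue (T i))"
    proof (rule measure_finite_Union)
      show "disjoint_family_on T {..<N}" using disj by (simp add: disjoint_family_on_def)
      show "T ` {..<N} \<subseteq> sets lebesgue" using Tlm by (auto simp: fmeasurable_def)
      show "emeasure lebesgue (T i) \<noteq> \<infinity>" if "i \<in> {..<N}" for i
        using fmeasurableD2[OF Tlm[of i]] unfolding infinity_ennreal_def .
    qed (rule finite_lessThan)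
    also have "\<dots> = real N * measure lebesgue A" by (simp add: Tm)
    finally have "real N * measure lebesgue A = measure lebesgue (\<Union>i\<in>{..<N}. T i)" ..
    also have "\<dots> \<le> measure lebesgue \<Omega>"
    proof (rule measure_mono_fmeasurable[OF _ _ Olm])
      show "(\<Union>i\<in>{..<N}. T i) \<subseteq> \<Omega>" using TO by blast
      show "(\<Union>i\<in>{..<N}. T i) \<in> sets lebesgue"
        by (intro sets.finite_UN finite_lessThan fmeasurableD[OF Tlm])
    qed
    finally show ?thesis .
  qed
  have m0: "measure lebesgue A = 0"
  proof (rule ccontr)
    assume "measure lebesgue A \<noteq> 0"
    hence pos: "measure lebesgue A > 0" by (simp add: order_less_le)
    obtain N :: nat where N: "measure lebesgue \<Omega> / measure lebesgue A < real N"
      using reals_Archimedean2 by blast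
    hence "measure lebesgue \<Omega> < real N * measure lebesgue A" using pos by (simp add: field_simps)
    with bound[of N] show False by simp
  qed
  have "emeasure lebesgue A = 0"
    using emeasure_eq_measure2[OF Alm] m0 by simp
  then show ?thesis using Asets by (auto simp: A_def[symmetric])
qed

end
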